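(* Let $\mathrm{S}$ be an associative semicopula (i.e. $\mathrm{S}(\mathrm{S}(x,y),z)=\mathrm{S}(x,\mathrm{S}(y,z))$ for all $x,y,z\in[0,1]$) such that for every $a\in(0,1)$ the function $x\mapsto\mathrm{S}(a,x)$ on $[0,1]$ is strictly increasing and left-continuous, and its discontinuity points are isolated in the sense that for every discontinuity point $z$ of $x\mapsto\mathrm{S}(a,x)$ there is $\varepsilon>0$ such that $x\mapsto\mathrm{S}(a,x)$ is continuous on $(z,z+\varepsilon)$. Then for every measurable space $(X,\mathcal{A})$, every capacity $\mu$ on $\mathcal{A}$ that is continuous from below, every $\mathcal{A}$-measurable $f\colon X\to[0,1]$ and every $a\in[0,1]$, $$\mathbf{I}_{\mathrm{S}}\big(\mu,\mathrm{S}(a,f)\big)=\mathrm{S}\big(a,\mathbf{I}_{\mathrm{S}}(\mu,f)\big),$$ where $\mathrm{S}(a,f)$ denotes the function $x\mapsto\mathrm{S}(a,f(x))$.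
   Context: A semicopula is a function $\mathrm{S}\colon[0,1]^2\to[0,1]$ that is non-decreasing in each coordinate and has neutral element $1$, i.e. $\mathrm{S}(x,1)=\mathrm{S}(1,x)=x$ for all $x\in[0,1]$. For a measurable space $(X,\mathcal{A})$ (with $X$ nonempty and $\mathcal{A}$ a $\sigma$-algebra), a capacity on $\mathcal{A}$ is a non-decreasing set function $\mu\colon\mathcal{A}\to[0,1]$ with $\mu(\emptyset)=0$ and $\mu(X)=1$; it is continuous from below if $\lim_{n\to\infty}\mu(A_n)=\mu\big(\bigcup_{k\ge1}A_k\big)$ whenever $A_1\subseteq A_2\subseteq\cdots$ are in $\mathcal{A}$. For a capacity $\mu$ and an $\mathcal{A}$-measurable $f\colon X\to[0,1]$, the generalized Sugeno integral is $$\mathbf{I}_{\mathrm{S}}(\mu,f)=\sup_{t\in[0,1]}\mathrm{S}\big(t,\mu(\{x\in X: f(x)\ge t\})\big).$$ *)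

theory Defs
  imports "HOL-Analysis.Analysis"
begin

definition semicopula :: "(real \<Rightarrow> real \<Rightarrow> real) \<Rightarrow> bool" where
  "semicopula S \<longleftrightarrow>
     (\<forall>x\<in>{0..1}. \<forall>y\<in>{0..1}. S x y \<in> {0..1}) \<and>
     (\<forall>x\<in>{0..1}. \<forall>x'\<in>{0..1}. \<forall>y\<in>{0..1}. x \<le> x' \<longrightarrow> S x y \<le> S x' y) \<and>
     (\<forall>x\<in>{0..1}. \<forall>y\<in>{0..1}. \<forall>y'\<in>{0..1}. y \<le> y' \<longrightarrow> S x y \<le> S x y') \<and>
     (\<forall>x\<in>{0..1}. S x 1 = x \<and> S 1 x = x)"

definition associative_on01 :: "(real \<Rightarrow> real \<Rightarrow> real) \<Rightarrow> bool" where
  "associative_on01 S \<longleftrightarrow>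
     (\<forall>x\<in>{0..1}. \<forall>y\<in>{0..1}. \<forall>z\<in>{0..1}. S (S x y) z = S x (S y z))"

definition capacity :: "'a measure \<Rightarrow> ('a set \<Rightarrow> real) \<Rightarrow> bool" where
  "capacity M \<mu> \<longleftrightarrow>
     (\<forall>A\<in>sets M. \<mu> A \<in> {0..1}) \<and>
     (\<forall>A\<in>sets M. \<forall>B\<in>sets M. A \<subseteq> B \<longrightarrow> \<mu> A \<le> \<mu> B) \<and>
     \<mu> {} = 0 \<and> \<mu> (space M) = 1"

definition continuous_from_below :: "'a measure \<Rightarrow> ('a set \<Rightarrow> real) \<Rightarrow> bool" where
  "continuous_from_below M \<mu> \<longleftrightarrow>
     (\<forall>A :: nat \<Rightarrow> 'a set. range A \<subseteq> sets M \<longrightarrow> incseq A \<longrightarrow>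
        (\<lambda>n. \<mu> (A n)) \<longlonglongrightarrow> \<mu> (\<Union>k. A k))"

definition gen_sugeno ::
  "(real \<Rightarrow> real \<Rightarrow> real) \<Rightarrow> 'a measure \<Rightarrow> ('a set \<Rightarrow> real) \<Rightarrow> ('a \<Rightarrow> real) \<Rightarrow> real" where
  "gen_sugeno S M \<mu> f = (SUP t\<in>{0..1}. S t (\<mu> {x \<in> space M. f x \<ge> t}))"

end

theory Submission
  imports Defs
begin

lemma semi_facts:
  assumes "semicopula S"
  shows "\<And>x y. x \<in> {0..1} \<Longrightarrow> y \<in> {0..1} \<Longrightarrow> 0 \<le> S x y \<and> S x y \<le> 1"
    and "\<And>x x' y. x \<in> {0..1} \<Longrightarrow> x' \<in> {0..1} \<Longrightarrow> y \<in> {0..1} \<Longrightarrow> x \<le> x' \<Longrightarrow> S x y \<le> S x' y"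
    and "\<And>x y y'. x \<in> {0..1} \<Longrightarrow> y \<in> {0..1} \<Longrightarrow> y' \<in> {0..1} \<Longrightarrow> y \<le> y' \<Longrightarrow> S x y \<le> S x y'"
    and "\<And>x. x \<in> {0..1} \<Longrightarrow> S x 1 = x"
    and "\<And>x. x \<in> {0..1} \<Longrightarrow> S 1 x = x"
    and "\<And>x. x \<in> {0..1} \<Longrightarrow> S x 0 = 0"
    and "\<And>x. x \<in> {0..1} \<Longrightarrow> S 0 x = 0"
proof -
  note d = assms[unfolded semicopula_def]
  show a: "\<And>x y. x \<in> {0..1} \<Longrightarrow> y \<in> {0..1} \<Longrightarrow> 0 \<le> S x y \<and> S x y \<le> 1"
    using d by auto
  show b: "\<And>x x' y. x \<in> {0..1} \<Longrightarrow> x' \<in> {0..1} \<Longrightarrow> y \<in> {0..1} \<Longrightarrow> x \<le> x' \<Longrightarrow> S x y \<le> S x' y"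
    using d by blast
  show c: "\<And>x y y'. x \<in> {0..1} \<Longrightarrow> y \<in> {0..1} \<Longrightarrow> y' \<in> {0..1} \<Longrightarrow> y \<le> y' \<Longrightarrow> S x y \<le> S x y'"
    using d by blast
  show e: "\<And>x. x \<in> {0..1} \<Longrightarrow> S x 1 = x" "\<And>x. x \<in> {0..1} \<Longrightarrow> S 1 x = x"
    using d by auto
  show "S x 0 = 0" if "x \<in> {0..1}" for x
  proof -
    have "S x 0 \<le> S 1 0" using b[of x 1 0] that by auto
    also have "\<dots> = 0" using e(2)[of 0] by simp
    finally show ?thesis using a[of x 0] that by auto
  qed
  show "S 0 x = 0" if "x \<in> {0..1}" for x
  proof -
    have "S 0 x \<le> S 0 1" using c[of 0 x 1] that by auto
    also have "\<dots> = 0" using e(1)[of 0] by simp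
    finally show ?thesis using a[of 0 x] that by auto
  qed
qed

theorem theorem3:
  fixes S :: "real \<Rightarrow> real \<Rightarrow> real"
  assumes semi: "semicopula S"
    and assoc: "associative_on01 S"
    and strict: "\<And>a. a \<in> {0<..<1} \<Longrightarrow> strict_mono_on {0..1} (S a)"
    and leftcont: "\<And>a x. a \<in> {0<..<1} \<Longrightarrow> x \<in> {0..1} \<Longrightarrow>
                      continuous (at x within {0..x}) (S a)"
    and isolated: "\<And>a z. a \<in> {0<..<1} \<Longrightarrow> z \<in> {0..1} \<Longrightarrow>
                      \<not> continuous (at z within {0..1}) (S a) \<Longrightarrow>
                      \<exists>\<epsilon>>0. continuous_on ({z<..<z+\<epsilon>} \<inter> {0..1}) (S a)"
  shows "\<forall>(M :: 'x measure) \<mu> f a.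
           space M \<noteq> {} \<longrightarrow> capacity M \<mu> \<longrightarrow> continuous_from_below M \<mu> \<longrightarrow>
           f \<in> borel_measurable M \<longrightarrow> (\<forall>x\<in>space M. f x \<in> {0..1}) \<longrightarrow> a \<in> {0..1} \<longrightarrow>
           gen_sugeno S M \<mu> (\<lambda>x. S a (f x)) = S a (gen_sugeno S M \<mu> f)"
proof (intro allI impI)
  fix M :: "'x measure" and \<mu> :: "'x set \<Rightarrow> real" and f :: "'x \<Rightarrow> real" and a :: real
  assume ne: "space M \<noteq> {}" and cap: "capacity M \<mu>" and cfb: "continuous_from_below M \<mu>"
    and fm: "f \<in> borel_measurable M" and f01: "\<forall>x\<in>space M. f x \<in> {0..1}" and a01: "a \<in> {0..1}"
  note sf = semi_facts[OF semi]
  have Srange: "S x y \<in> {0..1}" if "x \<in> {0..1}" "y \<in> {0..1}" for x y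
    using sf(1)[OF that] by auto
  have meas: "{x\<in>space M. t \<le> f x} \<in> sets M" for t
    using fm[unfolded borel_measurable_iff_ge] by blast
  have measg: "{x\<in>space M. t < f x} \<in> sets M" for t
    using fm[unfolded borel_measurable_iff_greater] by blast
  have mu01: "\<mu> A \<in> {0..1}" if "A \<in> sets M" for A
    using cap that unfolding capacity_def by auto
  have mumono: "\<mu> A \<le> \<mu> B" if "A \<in> sets M" "B \<in> sets M" "A \<subseteq> B" for A B
    using cap that unfolding capacity_def by auto
  have mu0: "\<mu> {} = 0" using cap unfolding capacity_def by auto
  define mu where "mu t = \<mu> {x\<in>space M. t \<le> f x}" for t
  have mu01': "mu t \<in> {0..1}" for t unfolding mu_def using mu01[OF meas] .
  define I where "I = gen_sugeno S M \<mu> f"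
  have I_def': "I = (SUP t\<in>{0..1}. S t (mu t))" unfolding I_def gen_sugeno_def mu_def ..
  have bddI: "bdd_above ((\<lambda>t. S t (mu t)) ` {0..1})"
    by (rule bdd_aboveI2[where M=1]) (use sf(1) mu01' in auto)
  have I_ge: "S t (mu t) \<le> I" if "t \<in> {0..1}" for t
    unfolding I_def' by (rule cSUP_upper[OF that bddI])
  have I01: "I \<in> {0..1}"
  proof -
    have "0 \<le> S 0 (mu 0)" using sf(1)[of 0 "mu 0"] mu01' by auto
    also have "\<dots> \<le> I" using I_ge[of 0] by auto
    finally have "0 \<le> I" .
    moreover have "I \<le> 1" unfolding I_def'
      by (rule cSUP_least) (use sf(1) mu01' in auto)
    ultimately show ?thesis by auto
  qed
  show "gen_sugeno S M \<mu> (\<lambda>x. S a (f x)) = S a (gen_sugeno S M \<mu> f)"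
  proof (cases "a = 0 \<or> a = 1")
    case True
    then show ?thesis
    proof
      assume a0: "a = 0"
      have "gen_sugeno S M \<mu> (\<lambda>x. S a (f x)) = (SUP t\<in>{0..1::real}. (0::real))"
        unfolding gen_sugeno_def
      proof (rule SUP_cong[OF refl])
        fix t :: real assume t: "t \<in> {0..1}"
        have eq: "{x \<in> space M. t \<le> S a (f x)} = {x \<in> space M. t \<le> 0}"
          using sf(7) f01 a0 by auto
        show "S t (\<mu> {x \<in> space M. t \<le> S a (f x)}) = 0"
        proof (cases "t = 0")
          case True
          then have "{x \<in> space M. t \<le> S a (f x)} = space M" using eq by auto
          moreover have "\<mu> (space M) = 1" using cap unfolding capacity_def by auto
          ultimately show ?thesis using sf(7)[of 1] True by simp
        next
          case False
          then have e0: "{x \<in> space M. t \<le> S a (f x)} = {}" using eq t by auto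
          show ?thesis unfolding e0 using mu0 sf(6)[OF t] by simp
        qed
      qed
      also have "\<dots> = 0" by simp
      finally show ?thesis using a0 sf(7) I01 I_def by simp
    next
      assume a1: "a = 1"
      have "(\<lambda>x. S a (f x)) = (\<lambda>x. if x \<in> space M then f x else S a (f x))"
        using a1 sf(5) f01 by auto
      have "gen_sugeno S M \<mu> (\<lambda>x. S a (f x)) = gen_sugeno S M \<mu> f"
        unfolding gen_sugeno_def
      proof (rule SUP_cong[OF refl])
        fix t :: real
        have "{x \<in> space M. t \<le> S a (f x)} = {x \<in> space M. t \<le> f x}"
          using a1 sf(5) f01 by auto
        then show "S t (\<mu> {x \<in> space M. t \<le> S a (f x)}) = S t (\<mu> {x \<in> space M. t \<le> f x})"
          by simp
      qed
      then show ?thesis using a1 sf(5) I01 I_def by simp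
    qed
  next
    case False
    then have aI: "a \<in> {0<..<1}" using a01 by auto
    have sm: "strict_mono_on {0..1} (S a)" using strict[OF aI] .
    have Sa_le: "S a x \<le> S a y \<longleftrightarrow> x \<le> y" if "x \<in> {0..1}" "y \<in> {0..1}" for x y
      using strict_mono_on_less_eq[OF sm that] .
    define R where "R = (SUP t\<in>{0..1}. S (S a t) (mu t))"
    have bddR: "bdd_above ((\<lambda>t. S (S a t) (mu t)) ` {0..1})"
      by (rule bdd_aboveI2[where M=1]) (use sf(1) Srange mu01' a01 in auto)
    have R_ge: "S (S a t) (mu t) \<le> R" if "t \<in> {0..1}" for t
      unfolding R_def by (rule cSUP_upper[OF that bddR])
    have R0: "0 \<le> R"
      using R_ge[of 0] sf(1)[of "S a 0" "mu 0"] Srange[of a 0] a01 mu01' by force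
    have assoc': "S (S a t) (mu t) = S a (S t (mu t))" if "t \<in> {0..1}" for t
      using assoc a01 that mu01' unfolding associative_on01_def by blast
    have claim1: "S a I = R"
    proof (rule antisym)
      show "R \<le> S a I"
        unfolding R_def
      proof (rule cSUP_least)
        fix t :: real assume t: "t \<in> {0..1}"
        show "S (S a t) (mu t) \<le> S a I"
          using assoc'[OF t] sf(3)[of a "S t (mu t)" I] a01 Srange[OF t mu01'] I01 I_ge[OF t]
          by simp
      qed simp
    next
      show "S a I \<le> R"
      proof (rule ccontr)
        assume "\<not> S a I \<le> R"
        then have e: "S a I - R > 0" by simp
        obtain d where d: "d > 0" and dd: "\<And>y. y \<in> {0..I} \<Longrightarrow> dist y I < d \<Longrightarrow> dist (S a y) (S a I) < S a I - R"
          using leftcont[OF aI I01] e unfolding continuous_within_eps_delta by metis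
        have "I - d < I" using d by simp
        then obtain t where t: "t \<in> {0..1}" and tl: "I - d < S t (mu t)"
          using less_cSUP_iff[of "{0..1::real}" "\<lambda>t. S t (mu t)" "I - d"] bddI
          unfolding I_def'[symmetric] by auto
        have y01: "S t (mu t) \<in> {0..I}" using I_ge[OF t] Srange[OF t mu01'] by auto
        have "dist (S t (mu t)) I < d" using tl I_ge[OF t] by (simp add: dist_real_def)
        from dd[OF y01 this] have "S a I - S a (S t (mu t)) < S a I - R"
          by (simp add: dist_real_def)
        then have "R < S a (S t (mu t))" by simp
        with R_ge[OF t] assoc'[OF t] show False by simp
      qed
    qed
    define E where "E s = {x\<in>space M. s \<le> S a (f x)}" for s
    have key: "E s \<in> sets M \<and> S s (\<mu> (E s)) \<le> R" if s: "s \<in> {0..1}" for s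
    proof (cases "a < s")
      case True
      have le_a: "S a (f x) \<le> a" if x: "x \<in> space M" for x
      proof -
        have "S a (f x) \<le> S a 1" using Sa_le[of "f x" 1] f01 x by auto
        also have "\<dots> = a" using sf(4) a01 by simp
        finally show ?thesis .
      qed
      have e0: "E s = {}" unfolding E_def using le_a True by force
      show ?thesis unfolding e0 using mu0 sf(6)[OF s] R0 by simp
    next
      case False
      define T where "T = {t\<in>{0..1}. s \<le> S a t}"
      define ts where "ts = Inf T"
      have S1: "S a 1 = a" using sf(4) a01 by simp
      have T1: "1 \<in> T" unfolding T_def using False S1 by simp
      have Tne: "T \<noteq> {}" using T1 by auto
      have Tbdd: "bdd_below T" unfolding T_def by (rule bdd_belowI[where m=0]) auto
      have ts_le: "ts \<le> t" if "t \<in> T" for t unfolding ts_def by (rule cInf_lower[OF that Tbdd])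
      have ts0: "0 \<le> ts" unfolding ts_def by (rule cInf_greatest[OF Tne]) (auto simp: T_def)
      have ts1: "ts \<le> 1" using ts_le[OF T1] .
      have ts01: "ts \<in> {0..1}" using ts0 ts1 by simp
      have above: "s \<le> S a u" if uh: "u \<in> {0..1}" "ts < u" for u
      proof -
        obtain t where t: "t \<in> T" "t < u" using uh(2) cInf_less_iff[OF Tne Tbdd] unfolding ts_def by auto
        then have "S a t \<le> S a u" using Sa_le[of t u] uh(1) unfolding T_def by auto
        then show ?thesis using t unfolding T_def by auto
      qed
      show ?thesis
      proof (cases "s \<le> S a ts")
        case True
        have "E s = {x\<in>space M. ts \<le> f x}" unfolding E_def
        proof safe
          fix x assume x: "x \<in> space M" "s \<le> S a (f x)"
          then have "f x \<in> T" using f01 unfolding T_def by auto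
          then show "ts \<le> f x" by (rule ts_le)
        next
          fix x assume x: "x \<in> space M" "ts \<le> f x"
          then have "S a ts \<le> S a (f x)" using Sa_le[of ts "f x"] ts01 f01 by auto
          then show "s \<le> S a (f x)" using True by simp
        qed
        moreover have "S s (mu ts) \<le> S (S a ts) (mu ts)"
          using sf(2)[of s "S a ts" "mu ts"] s Srange[of a ts] a01 ts01 mu01' True by auto
        ultimately show ?thesis using R_ge[OF ts01] meas[of ts] unfolding mu_def by simp
      next
        case less: False
        have sI: "s \<in> {0<..<1}"
          using less s False aI sf(1)[of a ts] a01 ts01 by auto
        have ts_lt1: "ts < 1" using less S1 False ts1 by (cases "ts = 1") auto
        have Eeq: "E s = {x\<in>space M. ts < f x}" unfolding E_def
        proof safe
          fix x assume x: "x \<in> space M" "s \<le> S a (f x)"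
          then have "f x \<in> T" using f01 unfolding T_def by auto
          then have "ts \<le> f x" by (rule ts_le)
          moreover have "f x \<noteq> ts" using x less by auto
          ultimately show "ts < f x" by simp
        next
          fix x assume x: "x \<in> space M" "ts < f x"
          then show "s \<le> S a (f x)" using above f01 by auto
        qed
        have Esets: "E s \<in> sets M" using Eeq measg by simp
        define A where "A n = {x\<in>space M. ts + inverse (real (Suc n)) \<le> f x}" for n
        have Asets: "range A \<subseteq> sets M" unfolding A_def using meas by auto
        have Ainc: "incseq A"
        proof (rule incseq_SucI)
          fix n
          have "inverse (real (Suc (Suc n))) \<le> inverse (real (Suc n))"
            by (rule le_imp_inverse_le) auto
          then show "A n \<subseteq> A (Suc n)" unfolding A_def
            by (smt (verit, ccfv_SIG) Collect_mono_iff)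
        qed
        have AU: "(\<Union>k. A k) = E s" unfolding Eeq A_def
        proof safe
          fix x k assume "x \<in> space M" "ts + inverse (real (Suc k)) \<le> f x"
          moreover have "0 < inverse (real (Suc k))" by simp
          ultimately show "ts < f x" by linarith
        next
          fix x assume x: "x \<in> space M" "ts < f x"
          obtain n where "inverse (real (Suc n)) < f x - ts"
            using reals_Archimedean[of "f x - ts"] x by auto
          then show "x \<in> (\<Union>k. {x \<in> space M. ts + inverse (real (Suc k)) \<le> f x})"
            using x by (auto intro!: exI[of _ n])
        qed
        have lim: "(\<lambda>n. \<mu> (A n)) \<longlonglongrightarrow> \<mu> (E s)"
          using cfb Asets Ainc AU unfolding continuous_from_below_def by metis
        define Lm where "Lm = \<mu> (E s)"
        have Lm01: "Lm \<in> {0..1}" unfolding Lm_def using mu01[OF Esets] .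
        have An_le: "\<mu> (A n) \<in> {0..Lm}" for n
          using mumono[of "A n" "E s"] Asets Esets AU mu01[of "A n"] unfolding Lm_def by auto
        have An_R: "S s (\<mu> (A n)) \<le> R" for n
        proof (cases "ts + inverse (real (Suc n)) \<le> 1")
          case True
          define u where "u = ts + inverse (real (Suc n))"
          have u01: "u \<in> {0..1}" using True ts0 unfolding u_def
            by (auto intro: add_nonneg_nonneg)
          have "ts < u" unfolding u_def by simp
          then have "s \<le> S a u" using above u01 by simp
          then have "S s (mu u) \<le> S (S a u) (mu u)"
            using sf(2)[of s "S a u" "mu u"] s Srange[of a u] a01 u01 mu01' by auto
          then show ?thesis using R_ge[OF u01] unfolding mu_def A_def u_def by simp
        next
          case False
          then have "A n = {}" unfolding A_def using f01 by force
          then show ?thesis using mu0 sf(6)[OF s] R0 by simp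
        qed
        have "S s Lm \<le> R"
        proof (rule ccontr)
          assume "\<not> S s Lm \<le> R"
          then have e: "S s Lm - R > 0" by simp
          obtain d where d: "d > 0" and dd: "\<And>y. y \<in> {0..Lm} \<Longrightarrow> dist y Lm < d \<Longrightarrow> dist (S s y) (S s Lm) < S s Lm - R"
            using leftcont[OF sI Lm01] e unfolding continuous_within_eps_delta by metis
          obtain no where no: "\<forall>n\<ge>no. norm (\<mu> (A n) - Lm) < d"
            using LIMSEQ_D[OF lim d] unfolding Lm_def by auto
          have "dist (\<mu> (A no)) Lm < d" using no by (simp add: dist_real_def)
          from dd[OF An_le this] have "S s Lm - S s (\<mu> (A no)) < S s Lm - R"
            by (simp add: dist_real_def)
          with An_R[of no] show False by simp
        qed
        then show ?thesis using Esets unfolding Lm_def by simp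
      qed
    qed
    define L where "L = (SUP s\<in>{0..1}. S s (\<mu> (E s)))"
    have bddL: "bdd_above ((\<lambda>s. S s (\<mu> (E s))) ` {0..1})"
      by (rule bdd_aboveI2[where M=R]) (use key in auto)
    have claim2: "L = R"
    proof (rule antisym)
      show "L \<le> R" unfolding L_def by (rule cSUP_least) (use key in auto)
    next
      show "R \<le> L" unfolding R_def
      proof (rule cSUP_least)
        fix t :: real assume t: "t \<in> {0..1}"
        have "E (S a t) = {x\<in>space M. t \<le> f x}" unfolding E_def
          using Sa_le[of t] t f01 by auto
        then have "S (S a t) (mu t) = S (S a t) (\<mu> (E (S a t)))" unfolding mu_def by simp
        also have "\<dots> \<le> L" unfolding L_def
          by (rule cSUP_upper[OF _ bddL]) (use Srange[of a t] a01 t in auto)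
        finally show "S (S a t) (mu t) \<le> L" .
      qed simp
    qed
    show ?thesis using claim1 claim2 unfolding L_def E_def I_def gen_sugeno_def by simp
  qed
qed

end
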